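(* Let $V$ be a finite nonempty set of voters and $A$ a finite set of alternatives. (i) If a consular election rule $F:\mathcal{P}(V,A)\to S_2(A)$ satisfies SPP and SPO, then its range graph $\mathcal{G}(F)$ satisfies edge-connectivity. (ii) Conversely, if $G$ is a graph on vertex set $A$ with at least one edge that satisfies edge-connectivity, then there exists a consular election rule $F:\mathcal{P}(V,A)\to S_2(A)$ satisfying SPP and SPO with $\mathcal{G}(F)=G$.
   Context: A profile assigns to each voter $i\in V$ a linear order $P_i$ on $A$; $P_i'P_{-i}$ replaces voter $i$'s order by $P_i'$. $S_2(A)$ is the set of 2-element subsets of $A$; a consular election rule is a map $F:\mathcal{P}(V,A)\to S_2(A)$. SPO: for all $P$, $i$, $P_i'$, $\mathrm{best}(P_i,F(P))\succeq_i\mathrm{best}(P_i,F(P_i'P_{-i}))$; SPP: same with $\mathrm{worst}$, where $\mathrm{best}(P_i,W)$, $\mathrm{worst}(P_i,W)$ are the $P_i$-best and $P_i$-worst elements of $W$. The range graph $\mathcal{G}(F)$ has vertex set $A$ and edge set equal to the range of $F$. A graph satisfies edge-connectivity if whenever $\{a,b\}$ and $\{c,d\}$ are edges with $a,b,c,d$ pairwise distinct, then $\{a,c\}$ or $\{a,d\}$ is an edge, and $\{b,c\}$ or $\{b,d\}$ is an edge. *)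

theory Defs
  imports Main
begin

text \<open>A linear order on A is a relation r with (x,y) in r meaning "x is weakly preferred to y".
  A profile on voters V assigns to each voter in V a linear order on A (and the empty
  relation outside V, so that profiles are determined by their values on V).\<close>

definition profiles :: "'v set \<Rightarrow> 'a set \<Rightarrow> ('v \<Rightarrow> 'a rel) set" where
  "profiles V A = {P. (\<forall>i\<in>V. linear_order_on A (P i)) \<and> (\<forall>i. i \<notin> V \<longrightarrow> P i = {})}"

definition S2 :: "'a set \<Rightarrow> 'a set set" where
  "S2 A = {W. W \<subseteq> A \<and> card W = 2}"

definition consular_rule :: "'v set \<Rightarrow> 'a set \<Rightarrow> (('v \<Rightarrow> 'a rel) \<Rightarrow> 'a set) \<Rightarrow> bool" where
  "consular_rule V A F \<longleftrightarrow> (\<forall>P\<in>profiles V A. F P \<in> S2 A)"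

definition best :: "'a rel \<Rightarrow> 'a set \<Rightarrow> 'a" where
  "best r W = (THE x. x \<in> W \<and> (\<forall>y\<in>W. (x, y) \<in> r))"

definition worst :: "'a rel \<Rightarrow> 'a set \<Rightarrow> 'a" where
  "worst r W = (THE x. x \<in> W \<and> (\<forall>y\<in>W. (y, x) \<in> r))"

definition SPO :: "'v set \<Rightarrow> 'a set \<Rightarrow> (('v \<Rightarrow> 'a rel) \<Rightarrow> 'a set) \<Rightarrow> bool" where
  "SPO V A F \<longleftrightarrow> (\<forall>P\<in>profiles V A. \<forall>i\<in>V. \<forall>r'. linear_order_on A r' \<longrightarrow>
     (best (P i) (F P), best (P i) (F (P(i := r')))) \<in> P i)"

definition SPP :: "'v set \<Rightarrow> 'a set \<Rightarrow> (('v \<Rightarrow> 'a rel) \<Rightarrow> 'a set) \<Rightarrow> bool" where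
  "SPP V A F \<longleftrightarrow> (\<forall>P\<in>profiles V A. \<forall>i\<in>V. \<forall>r'. linear_order_on A r' \<longrightarrow>
     (worst (P i) (F P), worst (P i) (F (P(i := r')))) \<in> P i)"

definition range_graph :: "'v set \<Rightarrow> 'a set \<Rightarrow> (('v \<Rightarrow> 'a rel) \<Rightarrow> 'a set) \<Rightarrow> 'a set set" where
  "range_graph V A F = F ` profiles V A"

definition edge_connectivity :: "'a set set \<Rightarrow> bool" where
  "edge_connectivity E \<longleftrightarrow> (\<forall>a b c d. {a, b} \<in> E \<longrightarrow> {c, d} \<in> E \<longrightarrow> distinct [a, b, c, d] \<longrightarrow>
     ({a, c} \<in> E \<or> {a, d} \<in> E) \<and> ({b, c} \<in> E \<or> {b, d} \<in> E))"

end

theory Submission imports Defs begin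

fun idx :: "'a list \<Rightarrow> 'a \<Rightarrow> nat" where
  "idx [] x = 0"
| "idx (y#ys) x = (if x = y then 0 else Suc (idx ys x))"

lemma idx_nth: "x \<in> set L \<Longrightarrow> L ! idx L x = x"
  by (induction L) auto

definition lord :: "'a list \<Rightarrow> 'a rel" where
  "lord L = {(x,y). x \<in> set L \<and> y \<in> set L \<and> idx L x \<le> idx L y}"

lemma lord_lin: "linear_order_on (set L) (lord L)"
  unfolding linear_order_on_def partial_order_on_def preorder_on_def refl_on_def trans_def
    antisym_def total_on_def lord_def
  by (auto dest: idx_nth) (metis idx_nth)

lemma best2:
  assumes "linear_order_on A r" "x \<in> A" "y \<in> A" "x \<noteq> y" "(x,y) \<in> r"
  shows "best r {x,y} = x \<and> worst r {x,y} = y"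
proof -
  have ant: "(y,x) \<notin> r" using assms unfolding linear_order_on_def partial_order_on_def antisym_def by blast
  have rf: "(x,x) \<in> r" "(y,y) \<in> r" using assms unfolding linear_order_on_def partial_order_on_def
      preorder_on_def refl_on_def by auto
  show ?thesis unfolding best_def worst_def
    by (rule conjI; rule the_equality) (use ant rf assms(5) in auto)
qed

lemma two_elems:
  assumes "linear_order_on A r" "W \<in> S2 A"
  obtains p q where "W = {p,q}" "p \<noteq> q" "p \<in> A" "q \<in> A" "(p,q) \<in> r"
    "best r W = p" "worst r W = q"
proof -
  obtain x y where W: "W = {x,y}" "x \<noteq> y" using assms(2) unfolding S2_def by (auto simp: card_2_iff)
  have A: "x \<in> A" "y \<in> A" using assms(2) W unfolding S2_def by auto
  have "(x,y) \<in> r \<or> (y,x) \<in> r" using assms(1) A W(2) unfolding linear_order_on_def total_on_def by auto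
  then show ?thesis
  proof
    assume "(x,y) \<in> r" then show ?thesis using that[of x y] best2[OF assms(1) A W(2)] W A by auto
  next
    assume "(y,x) \<in> r" then show ?thesis using that[of y x] best2[OF assms(1) A(2,1)] W A
      by (auto simp: insert_commute)
  qed
qed

lemma lin_refl: "linear_order_on A r \<Longrightarrow> x \<in> A \<Longrightarrow> (x,x) \<in> r"
  unfolding linear_order_on_def partial_order_on_def preorder_on_def refl_on_def by auto
lemma lin_trans: "linear_order_on A r \<Longrightarrow> (x,y) \<in> r \<Longrightarrow> (y,z) \<in> r \<Longrightarrow> (x,z) \<in> r"
  unfolding linear_order_on_def partial_order_on_def preorder_on_def trans_def by blast
lemma lin_antisym: "linear_order_on A r \<Longrightarrow> (x,y) \<in> r \<Longrightarrow> (y,x) \<in> r \<Longrightarrow> x = y"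
  unfolding linear_order_on_def partial_order_on_def antisym_def by blast
lemma lin_total: "linear_order_on A r \<Longrightarrow> x \<in> A \<Longrightarrow> y \<in> A \<Longrightarrow> (x,y) \<in> r \<or> (y,x) \<in> r"
  unfolding linear_order_on_def total_on_def by (metis lin_refl linear_order_on_def total_on_def)
lemma lin_sub: "linear_order_on A r \<Longrightarrow> (x,y) \<in> r \<Longrightarrow> x \<in> A \<and> y \<in> A"
  unfolding linear_order_on_def partial_order_on_def preorder_on_def refl_on_def by auto

lemma best_in: "linear_order_on A r \<Longrightarrow> W \<in> S2 A \<Longrightarrow> best r W \<in> A \<and> worst r W \<in> A"
  by (erule two_elems) auto

definition upd :: "'v set \<Rightarrow> 'a rel \<Rightarrow> ('v \<Rightarrow> 'a rel) \<Rightarrow> 'v \<Rightarrow> 'a rel" where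
  "upd S r Q = (\<lambda>j. if j \<in> S then r else Q j)"

lemma upd_prof: "Q \<in> profiles V A \<Longrightarrow> S \<subseteq> V \<Longrightarrow> linear_order_on A r \<Longrightarrow> upd S r Q \<in> profiles V A"
  unfolding profiles_def upd_def by auto

lemma path:
  assumes cr: "consular_rule V A F" and spo: "SPO V A F" and spp: "SPP V A F"
    and "finite S" "S \<subseteq> V" and Q: "Q \<in> profiles V A" and r: "linear_order_on A r"
  shows "(best r (F (upd S r Q)), best r (F Q)) \<in> r \<and> (worst r (F (upd S r Q)), worst r (F Q)) \<in> r"
  using assms(4,5)
proof (induction S rule: finite_induct)
  case empty
  have "upd {} r Q = Q" unfolding upd_def by auto
  moreover have "F Q \<in> S2 A" using cr Q unfolding consular_rule_def by auto
  ultimately show ?case using best_in[OF r] lin_refl[OF r] by auto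
next
  case (insert i S)
  define P where "P = upd (insert i S) r Q"
  have P: "P \<in> profiles V A" unfolding P_def using upd_prof[OF Q insert(4) r] .
  have iV: "i \<in> V" using insert by auto
  have Qi: "linear_order_on A (Q i)" using Q iV unfolding profiles_def by auto
  have Pi: "P i = r" unfolding P_def upd_def by auto
  have PQ: "P(i := Q i) = upd S r Q" unfolding P_def upd_def using insert(2) by (auto simp: fun_eq_iff)
  have "(best r (F P), best r (F (upd S r Q))) \<in> r" using spo P iV Qi Pi PQ unfolding SPO_def by metis
  moreover have "(worst r (F P), worst r (F (upd S r Q))) \<in> r" using spp P iV Qi Pi PQ unfolding SPP_def by metis
  ultimately show ?case using insert(3,4) lin_trans[OF r] unfolding P_def by blast
qed

lemma lord_lin': "set L = A \<Longrightarrow> linear_order_on A (lord L)"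
  using lord_lin by blast

lemma idx_le: "(p,q) \<in> lord L \<Longrightarrow> p \<in> set L \<and> idx L p \<le> idx L q"
  unfolding lord_def by auto

lemma partI:
  assumes cr: "consular_rule V A F" and spo: "SPO V A F" and spp: "SPP V A F"
    and fV: "finite V" and fA: "finite A"
    and e1: "{x,y} \<in> F ` profiles V A" and e2: "{c,d} \<in> F ` profiles V A"
    and d: "x \<noteq> y" "x \<noteq> c" "x \<noteq> d" "c \<noteq> d"
  shows "{x,c} \<in> F ` profiles V A \<or> {x,d} \<in> F ` profiles V A"
proof -
  obtain Q1 where Q1: "Q1 \<in> profiles V A" "F Q1 = {x,y}" using e1 by force
  obtain Q2 where Q2: "Q2 \<in> profiles V A" "F Q2 = {c,d}" using e2 by force
  have "{x,y} \<in> S2 A" "{c,d} \<in> S2 A" using Q1 Q2 cr unfolding consular_rule_def by metis+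
  then have inA: "x \<in> A" "y \<in> A" "c \<in> A" "d \<in> A" unfolding S2_def by auto
  obtain xs where xs: "set xs = A" using finite_list[OF fA] by blast
  define L where "L = [x,c,d] @ xs"
  have sL: "set L = A" unfolding L_def using xs inA by auto
  define r where "r = lord L"
  have r: "linear_order_on A r" unfolding r_def using lord_lin' sL by blast
  have ix: "idx L x = 0" "idx L c = 1" "idx L d = 2" unfolding L_def using d by auto
  have "(x,y) \<in> r" unfolding r_def lord_def using ix sL inA by auto
  then have bx: "best r {x,y} = x" using best2[OF r inA(1,2) d(1)] by auto
  have "(c,d) \<in> r" unfolding r_def lord_def using ix sL inA by auto
  then have wd: "worst r {c,d} = d" using best2[OF r inA(3,4) d(4)] by auto
  define U where "U = upd V r Q1"
  have U2: "U = upd V r Q2" unfolding U_def upd_def using Q1(1) Q2(1) unfolding profiles_def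
    by (auto simp: fun_eq_iff)
  have UP: "U \<in> profiles V A" unfolding U_def using upd_prof[OF Q1(1) _ r] by blast
  have b: "(best r (F U), x) \<in> r" using path[OF cr spo spp fV subset_refl Q1(1) r] Q1(2) bx
    unfolding U_def by simp
  have w: "(worst r (F U), d) \<in> r" using path[OF cr spo spp fV subset_refl Q2(1) r] Q2(2) wd
    unfolding U2 by simp
  have "F U \<in> S2 A" using cr UP unfolding consular_rule_def by blast
  then obtain p q where pq: "F U = {p,q}" "p \<noteq> q" "best r (F U) = p" "worst r (F U) = q"
    using two_elems[OF r] by metis
  have "p \<in> set L" "idx L p \<le> 0" using b pq idx_le ix unfolding r_def by fastforce+
  then have "p = x" using idx_nth[of p L] unfolding L_def by auto
  have "q \<in> set L" "idx L q \<le> 2" using w pq idx_le ix unfolding r_def by fastforce+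
  then have "q = L ! idx L q" using idx_nth by metis
  moreover have "idx L q = 0 \<or> idx L q = 1 \<or> idx L q = 2" using \<open>idx L q \<le> 2\<close> by auto
  ultimately have "q = x \<or> q = c \<or> q = d" unfolding L_def by auto
  then have "q = c \<or> q = d" using pq \<open>p = x\<close> by auto
  then show ?thesis using pq \<open>p = x\<close> UP by blast
qed

lemma max_exists:
  assumes r: "linear_order_on A r" and "finite M" "M \<noteq> {}" "M \<subseteq> A"
  shows "\<exists>m\<in>M. \<forall>y\<in>M. (m,y) \<in> r"
  using assms(2,3,4)
proof (induction M rule: finite_ne_induct)
  case (singleton x) then show ?case using lin_refl[OF r] by auto
next
  case (insert x F)
  then obtain m where m: "m \<in> F" "\<forall>y\<in>F. (m,y) \<in> r" by auto
  have "(m,x) \<in> r \<or> (x,m) \<in> r" using lin_total[OF r] m insert by blast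
  then show ?case
  proof
    assume "(m,x) \<in> r" then show ?thesis using m by auto
  next
    assume "(x,m) \<in> r" then show ?thesis using m lin_trans[OF r] lin_refl[OF r] insert(5) by blast
  qed
qed

definition opt :: "'a rel \<Rightarrow> 'a set set \<Rightarrow> 'a set \<Rightarrow> bool" where
  "opt r E e = (\<forall>e'\<in>E. (best r e, best r e') \<in> r \<and> (worst r e, worst r e') \<in> r)"

lemma exists_opt:
  assumes r: "linear_order_on A r" and fA: "finite A" and E: "E \<subseteq> S2 A" "E \<noteq> {}"
    and ec: "edge_connectivity E"
  shows "\<exists>e\<in>E. opt r E e"
proof -
  have fE: "finite E" proof (rule finite_subset[of E "Pow A"])
    show "E \<subseteq> Pow A" using E(1) unfolding S2_def by auto
  qed (use fA in simp)
  have sub: "(\<lambda>e. best r e) ` E \<subseteq> A" "(\<lambda>e. worst r e) ` E \<subseteq> A" using best_in[OF r] E(1) by auto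
  then obtain x where x: "x \<in> (\<lambda>e. best r e) ` E" "\<forall>y\<in>(\<lambda>e. best r e) ` E. (x,y) \<in> r"
    using max_exists[OF r, of "(\<lambda>e. best r e) ` E"] fE E(2) sub(1) by blast
  obtain z where z: "z \<in> (\<lambda>e. worst r e) ` E" "\<forall>y\<in>(\<lambda>e. worst r e) ` E. (z,y) \<in> r"
    using max_exists[OF r, of "(\<lambda>e. worst r e) ` E"] fE E(2) sub(2) by blast
  obtain e1 where e1: "e1 \<in> E" "best r e1 = x" using x by auto
  obtain e2 where e2: "e2 \<in> E" "worst r e2 = z" using z by auto
  obtain w where w: "e1 = {x,w}" "x \<noteq> w" "x \<in> A" "w \<in> A" "(x,w) \<in> r" "worst r e1 = w"
    using two_elems[OF r, of e1] e1 E(1) by (metis subsetD)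
  obtain y where y: "e2 = {y,z}" "y \<noteq> z" "y \<in> A" "z \<in> A" "(y,z) \<in> r" "best r e2 = y"
    using two_elems[OF r, of e2] e2 E(1) by (metis subsetD)
  have xy: "(x,y) \<in> r" using x(2) e2 y by auto
  have goodxz: "opt r E {x,z}" if "{x,z} \<in> E" "x \<noteq> z"
  proof -
    have "(x,z) \<in> r" using lin_trans[OF r xy y(5)] .
    then have "best r {x,z} = x" "worst r {x,z} = z" using best2[OF r w(3) y(4) that(2)] by auto
    then show ?thesis unfolding opt_def using x(2) z(2) by auto
  qed
  show ?thesis
  proof (cases "x = y \<or> x = z")
    case True
    then have "x = y" using xy y lin_antisym[OF r] by blast
    then show ?thesis using goodxz e2 y by auto
  next
    case nxyz: False
    show ?thesis
    proof (cases "w = y \<or> w = z")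
      case True
      have "(w,z) \<in> r" using True y(5) lin_refl[OF r y(4)] by auto
      have "opt r E e1" unfolding opt_def
      proof
        fix e' assume "e' \<in> E"
        then show "(best r e1, best r e') \<in> r \<and> (worst r e1, worst r e') \<in> r"
          using x(2) z(2) e1(2) w(6) lin_trans[OF r \<open>(w,z) \<in> r\<close>] by auto
      qed
      then show ?thesis using e1 by blast
    next
      case False
      have "distinct [x,w,y,z]" using False nxyz w y by auto
      moreover have "{x,w} \<in> E" "{y,z} \<in> E" using e1 e2 w y by auto
      ultimately have "{x,y} \<in> E \<or> {x,z} \<in> E" using ec unfolding edge_connectivity_def by blast
      then show ?thesis
      proof
        assume xyE: "{x,y} \<in> E"
        have "worst r {x,y} = y" using best2[OF r w(3) y(3) _ xy] nxyz by auto
        then have "(z,y) \<in> r" using z(2) xyE by force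
        then show ?thesis using lin_antisym[OF r y(5)] y(2) by auto
      next
        assume "{x,z} \<in> E" then show ?thesis using goodxz nxyz by blast
      qed
    qed
  qed
qed

lemma partII:
  fixes V :: "'v set"
  assumes fA: "finite A" and i0: "i0 \<in> V" and E: "E \<subseteq> S2 A" "E \<noteq> {}"
    and ec: "edge_connectivity E"
  shows "\<exists>F. consular_rule V A F \<and> SPP V A F \<and> SPO V A F \<and> range_graph V A F = E"
proof -
  define g where "g = (\<lambda>r. SOME e. e \<in> E \<and> opt r E e)"
  have g: "g r \<in> E \<and> opt r E (g r)" if "linear_order_on A r" for r
    proof -
    have "\<exists>e. e \<in> E \<and> opt r E e" using exists_opt[OF that fA E ec] by blast
    then show ?thesis unfolding g_def by (rule someI_ex)
  qed
  define F where "F = (\<lambda>P::'v \<Rightarrow> 'a rel. g (P i0))"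
  have Pi: "linear_order_on A (P i)" if "P \<in> profiles V A" "i \<in> V" for P i
    using that unfolding profiles_def by auto
  have FE: "F P \<in> E" if "P \<in> profiles V A" for P
    unfolding F_def using g[OF Pi[OF that i0]] by blast
  have cr: "consular_rule V A F" unfolding consular_rule_def using FE E(1) by blast
  have both: "(best (P i) (F P), best (P i) (F (P(i := r')))) \<in> P i \<and>
      (worst (P i) (F P), worst (P i) (F (P(i := r')))) \<in> P i"
    if P: "P \<in> profiles V A" and i: "i \<in> V" and r': "linear_order_on A r'" for P i r'
  proof (cases "i = i0")
    case True
    have "F (P(i := r')) = g r'" unfolding F_def using True by simp
    then have "F (P(i := r')) \<in> E" using g[OF r'] by simp
    moreover have "opt (P i) E (F P)" unfolding F_def using g[OF Pi[OF P i0]] True by simp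
    ultimately show ?thesis unfolding opt_def by blast
  next
    case False
    have "F (P(i := r')) = F P" unfolding F_def using False by simp
    moreover have "F P \<in> S2 A" using FE[OF P] E(1) by blast
    ultimately show ?thesis using best_in[OF Pi[OF P i]] lin_refl[OF Pi[OF P i]] by auto
  qed
  have spo: "SPO V A F" unfolding SPO_def using both by blast
  have spp: "SPP V A F" unfolding SPP_def using both by blast
  have "E \<subseteq> F ` profiles V A"
  proof
    fix e assume eE: "e \<in> E"
    then have "e \<in> S2 A" using E(1) by blast
    then obtain a b where ab: "e = {a,b}" "a \<noteq> b" "a \<in> A" "b \<in> A"
      unfolding S2_def by (auto simp: card_2_iff)
    obtain xs where xs: "set xs = A" using finite_list[OF fA] by blast
    define L where "L = [a,b] @ xs"
    have sL: "set L = A" unfolding L_def using xs ab by auto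
    define r where "r = lord L"
    have r: "linear_order_on A r" unfolding r_def using lord_lin' sL by blast
    have ix: "idx L a = 0" "idx L b = 1" unfolding L_def using ab by auto
    have "(a,b) \<in> r" unfolding r_def lord_def using ix sL ab by auto
    then have bw: "best r e = a" "worst r e = b" using best2[OF r ab(3,4,2)] ab(1) by auto
    define U where "U = (\<lambda>j. if j \<in> V then r else {})"
    have UP: "U \<in> profiles V A" unfolding U_def profiles_def using r by auto
    have FU: "F U = g r" unfolding F_def U_def using i0 by simp
    have gr: "g r \<in> E" "opt r E (g r)" using g[OF r] by auto
    then have b: "(best r (g r), a) \<in> r" "(worst r (g r), b) \<in> r" unfolding opt_def using eE bw by auto
    obtain p q where pq: "g r = {p,q}" "p \<noteq> q" "best r (g r) = p" "worst r (g r) = q"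
      using two_elems[OF r, of "g r"] gr E(1) by (metis subsetD)
    have "p \<in> set L" "idx L p \<le> 0" using b pq idx_le ix unfolding r_def by fastforce+
    then have "p = a" using idx_nth[of p L] unfolding L_def by auto
    have "q \<in> set L" "idx L q \<le> 1" using b pq idx_le ix unfolding r_def by fastforce+
    then have "q = L ! idx L q" using idx_nth by metis
    moreover have "idx L q = 0 \<or> idx L q = 1" using \<open>idx L q \<le> 1\<close> by auto
    ultimately have "q = a \<or> q = b" unfolding L_def by auto
    then have "g r = e" using pq \<open>p = a\<close> ab by auto
    then show "e \<in> F ` profiles V A" using FU UP by force
  qed
  then have "range_graph V A F = E" unfolding range_graph_def using FE by blast
  then show ?thesis using cr spo spp by blast
qed

theorem proposition35:
  fixes V :: "'v set" and A :: "'a set"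
  assumes "finite V" and "V \<noteq> {}" and "finite A"
  shows "(\<forall>F. consular_rule V A F \<and> SPP V A F \<and> SPO V A F \<longrightarrow>
            edge_connectivity (range_graph V A F))
       \<and> (\<forall>E. E \<subseteq> S2 A \<and> E \<noteq> {} \<and> edge_connectivity E \<longrightarrow>
            (\<exists>F. consular_rule V A F \<and> SPP V A F \<and> SPO V A F \<and> range_graph V A F = E))"
proof (intro conjI allI impI)
  fix F assume H: "consular_rule V A F \<and> SPP V A F \<and> SPO V A F"
  show "edge_connectivity (range_graph V A F)"
    unfolding edge_connectivity_def range_graph_def
  proof (intro allI impI)
    fix a b c d
    assume ab: "{a,b} \<in> F ` profiles V A" and cd: "{c,d} \<in> F ` profiles V A"
      and ds: "distinct [a,b,c,d]"
    have ba: "{b,a} \<in> F ` profiles V A" using ab by (simp add: insert_commute)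
    show "({a, c} \<in> F ` profiles V A \<or> {a, d} \<in> F ` profiles V A) \<and>
          ({b, c} \<in> F ` profiles V A \<or> {b, d} \<in> F ` profiles V A)"
      proof
      have dd: "a \<noteq> b" "a \<noteq> c" "a \<noteq> d" "c \<noteq> d" "b \<noteq> c" "b \<noteq> d" using ds by auto
      show "{a, c} \<in> F ` profiles V A \<or> {a, d} \<in> F ` profiles V A"
        using partI[OF _ _ _ assms(1) assms(3) ab cd dd(1-4)] H by blast
      show "{b, c} \<in> F ` profiles V A \<or> {b, d} \<in> F ` profiles V A"
        using partI[OF _ _ _ assms(1) assms(3) ba cd _ dd(5,6,4)] H dd(1) by blast
    qed
  qed
next
  fix E assume H: "E \<subseteq> S2 A \<and> E \<noteq> {} \<and> edge_connectivity E"
  obtain i0 where "i0 \<in> V" using assms(2) by blast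
  then show "\<exists>F. consular_rule V A F \<and> SPP V A F \<and> SPO V A F \<and> range_graph V A F = E"
    using partII[OF assms(3) _ _ _ _, of _ V E] H by blast
qed

end
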